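(* For all $x\in\mathbb{C}$ and all integers $n\ge0$, \[ \sum_{k=0}^n x^k\big(3L_{4k}+(7x-2)F_{4k+4}\big)=7x^{n+1}F_{4n+4} \] and \[ \sum_{k=0}^n x^k\big(15F_{4k}+(7x-2)L_{4k+4}\big)=7\big(x^{n+1}L_{4n+4}-2\big). \]
   Context: $F_n,L_n$ are the Fibonacci and Lucas numbers: $F_0=0$, $F_1=1$, $L_0=2$, $L_1=1$, $W_n=W_{n-1}+W_{n-2}$. *)

theory Defs
  imports Complex_Main "HOL-Number_Theory.Fib"
begin

fun lucas :: "nat \<Rightarrow> nat" where
  "lucas 0 = 2"
| "lucas (Suc 0) = 1"
| "lucas (Suc (Suc n)) = lucas (Suc n) + lucas n"

end

theory Submission
  imports Defs
begin

lemma fl_id: "2*fib(m+4) = 7*fib m + 3*lucas m \<and> 2*lucas(m+4) = 7*lucas m + 15*fib m"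
proof (induction m rule: fib.induct)
  case 1 then show ?case by (simp add: numeral_eq_Suc)
next
  case 2 then show ?case by (simp add: numeral_eq_Suc)
next
  case (3 n) then show ?case by (simp add: numeral_eq_Suc)
qed

theorem corollary8:
  fixes x :: complex and n :: nat
  shows "(\<Sum>k=0..n. x ^ k * (3 * of_nat (lucas (4*k)) + (7*x - 2) * of_nat (fib (4*k+4))))
           = 7 * x ^ (n+1) * of_nat (fib (4*n+4))
     \<and> ((\<Sum>k=0..n. x ^ k * (15 * of_nat (fib (4*k)) + (7*x - 2) * of_nat (lucas (4*k+4))))
           = 7 * (x ^ (n+1) * of_nat (lucas (4*n+4)) - 2))"
proof (induction n)
  case 0
  then show ?case by (simp add: numeral_eq_Suc)
next
  case (Suc n)
  define m where "m = 4*n+4"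
  have e1: "2*(of_nat (fib(m+4))::complex) = 7*of_nat (fib m) + 3*of_nat (lucas m)"
    using fl_id[of m] by (metis (mono_tags) of_nat_add of_nat_mult of_nat_numeral)
  have e2: "2*(of_nat (lucas(m+4))::complex) = 7*of_nat (lucas m) + 15*of_nat (fib m)"
    using fl_id[of m] by (metis (mono_tags) of_nat_add of_nat_mult of_nat_numeral)
  have m4: "4 * Suc n + 4 = m + 4" "4 * Suc n = m" by (simp_all add: m_def)
  have IH1: "(\<Sum>k=0..n. x ^ k * (3 * of_nat (lucas (4*k)) + (7*x - 2) * of_nat (fib (4*k+4)))) = 7 * x ^ (n+1) * of_nat (fib m)"
    using Suc.IH by (simp add: m_def)
  have IH2: "(\<Sum>k=0..n. x ^ k * (15 * of_nat (fib (4*k)) + (7*x - 2) * of_nat (lucas (4*k+4)))) = 7 * (x ^ (n+1) * of_nat (lucas m) - 2)"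
    using Suc.IH by (simp add: m_def)
  have g1: "7 * x ^ (n+1) * of_nat (fib m) + x^(n+1) * (3 * of_nat (lucas m) + (7*x - 2) * of_nat (fib (m+4)))
        = 7 * x ^ (n+1+1) * of_nat (fib (m+4))"
  proof -
    have "7 * x ^ (n+1) * of_nat (fib m) + x^(n+1) * (3 * of_nat (lucas m) + (7*x - 2) * of_nat (fib (m+4)))
       = x^(n+1) * (7*of_nat (fib m) + 3*of_nat (lucas m)) + x^(n+1)*(7*x - 2) * of_nat (fib (m+4))"
      by (simp add: algebra_simps)
    also have "\<dots> = x^(n+1) * (2*of_nat (fib(m+4))) + x^(n+1)*(7*x - 2) * of_nat (fib (m+4))"
      using e1 by simp
    also have "\<dots> = 7 * x ^ (n+1+1) * of_nat (fib (m+4))" by (simp add: algebra_simps)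
    finally show ?thesis .
  qed
  have g2: "7 * (x ^ (n+1) * of_nat (lucas m) - 2) + x^(n+1) * (15 * of_nat (fib m) + (7*x - 2) * of_nat (lucas (m+4)))
        = 7 * (x ^ (n+1+1) * of_nat (lucas (m+4)) - 2)"
  proof -
    have "7 * (x ^ (n+1) * of_nat (lucas m) - 2) + x^(n+1) * (15 * of_nat (fib m) + (7*x - 2) * of_nat (lucas (m+4)))
       = x^(n+1) * (7*of_nat (lucas m) + 15*of_nat (fib m)) + x^(n+1)*(7*x - 2) * of_nat (lucas (m+4)) - 14"
      by (simp add: algebra_simps)
    also have "\<dots> = x^(n+1) * (2*of_nat (lucas(m+4))) + x^(n+1)*(7*x - 2) * of_nat (lucas (m+4)) - 14"
      using e2 by simp
    also have "\<dots> = 7 * (x ^ (n+1+1) * of_nat (lucas (m+4)) - 2)" by (simp add: algebra_simps)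
    finally show ?thesis .
  qed
  show ?case
    unfolding sum.atLeast0_atMost_Suc m4 IH1 IH2 unfolding Suc_eq_plus1 using g1 g2
    by (intro conjI g1 g2)
qed

end
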